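(* Let $X$ be a finite positive definite metric space and let $x\in X$. Suppose there exists a probability measure $\nu$ on $X$ with $\nu(\{x\})=0$ such that $$\sum_{z\in X}e^{-d(y,z)}\nu(z)\le e^{-d(x,y)}\qquad\text{for all }y\in X.$$ Then $x$ does not belong to the support of the diversity-maximizing measure of $X$.
   Context: A finite metric space $(X,d)$ is positive definite if the matrix $Z=(e^{-d(x,y)})_{x,y\in X}$ is positive definite. The diversity-maximizing measure is the (unique, by positive definiteness) probability measure $\mu$ on $X$ minimizing $\sum_{x,y}e^{-d(x,y)}\mu(x)\mu(y)$; its support is $\{y:\mu(y)>0\}$. *)

theory Defs
  imports Complex_Main
begin

definition finite_metric_space :: "'a set \<Rightarrow> ('a \<Rightarrow> 'a \<Rightarrow> real) \<Rightarrow> bool" where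
  "finite_metric_space X d \<longleftrightarrow> finite X \<and>
     (\<forall>x\<in>X. \<forall>y\<in>X. d x y \<ge> 0 \<and> (d x y = 0 \<longleftrightarrow> x = y) \<and> d x y = d y x) \<and>
     (\<forall>x\<in>X. \<forall>y\<in>X. \<forall>z\<in>X. d x z \<le> d x y + d y z)"

definition positive_definite_space :: "'a set \<Rightarrow> ('a \<Rightarrow> 'a \<Rightarrow> real) \<Rightarrow> bool" where
  "positive_definite_space X d \<longleftrightarrow>
     (\<forall>w::'a \<Rightarrow> real. (\<exists>y\<in>X. w y \<noteq> 0) \<longrightarrow>
        (\<Sum>x\<in>X. \<Sum>y\<in>X. w x * exp (- d x y) * w y) > 0)"

definition prob_measure_on :: "'a set \<Rightarrow> ('a \<Rightarrow> real) \<Rightarrow> bool" where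
  "prob_measure_on X \<mu> \<longleftrightarrow> (\<forall>y\<in>X. \<mu> y \<ge> 0) \<and> (\<Sum>y\<in>X. \<mu> y) = 1"

definition diversity_form :: "'a set \<Rightarrow> ('a \<Rightarrow> 'a \<Rightarrow> real) \<Rightarrow> ('a \<Rightarrow> real) \<Rightarrow> real" where
  "diversity_form X d \<mu> = (\<Sum>x\<in>X. \<Sum>y\<in>X. exp (- d x y) * \<mu> x * \<mu> y)"

text \<open>mu is the diversity-maximizing measure: a probability measure minimizing the form
  (unique when the space is positive definite).\<close>
definition diversity_maximizing :: "'a set \<Rightarrow> ('a \<Rightarrow> 'a \<Rightarrow> real) \<Rightarrow> ('a \<Rightarrow> real) \<Rightarrow> bool" where
  "diversity_maximizing X d \<mu> \<longleftrightarrow> prob_measure_on X \<mu> \<and>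
     (\<forall>\<nu>. prob_measure_on X \<nu> \<longrightarrow> diversity_form X d \<mu> \<le> diversity_form X d \<nu>)"

definition support_on :: "'a set \<Rightarrow> ('a \<Rightarrow> real) \<Rightarrow> 'a set" where
  "support_on X \<mu> = {y\<in>X. \<mu> y > 0}"

end

theory Submission
  imports Defs
begin

definition Bf :: "'a set \<Rightarrow> ('a \<Rightarrow> 'a \<Rightarrow> real) \<Rightarrow> ('a \<Rightarrow> real) \<Rightarrow> ('a \<Rightarrow> real) \<Rightarrow> real" where
  "Bf X d f g = (\<Sum>y\<in>X. \<Sum>z\<in>X. exp (- d y z) * f y * g z)"

lemma Bf_left: "Bf X d (\<lambda>y. f y + s * g y) h = Bf X d f h + s * Bf X d g h"
  unfolding Bf_def by (simp add: algebra_simps sum.distrib sum_distrib_left)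

lemma Bf_right: "Bf X d h (\<lambda>y. f y + s * g y) = Bf X d h f + s * Bf X d h g"
  unfolding Bf_def by (simp add: algebra_simps sum.distrib sum_distrib_left)

lemma Bf_sym:
  assumes "\<forall>x\<in>X. \<forall>y\<in>X. d x y = d y x"
  shows "Bf X d f g = Bf X d g f"
  unfolding Bf_def
  apply (subst sum.swap)
  apply (rule sum.cong, simp)+
  using assms by (simp add: mult_ac)

lemma Bf_row: "Bf X d f g = (\<Sum>y\<in>X. f y * (\<Sum>z\<in>X. exp (- d y z) * g z))"
  unfolding Bf_def by (simp add: sum_distrib_left mult_ac)

theorem proposition4p4:
  fixes X :: "'a set" and d :: "'a \<Rightarrow> 'a \<Rightarrow> real" and x :: 'a
    and \<nu> \<mu> :: "'a \<Rightarrow> real"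
  assumes "finite_metric_space X d"
    and "positive_definite_space X d"
    and "x \<in> X"
    and "prob_measure_on X \<nu>"
    and "\<nu> x = 0"
    and "\<forall>y\<in>X. (\<Sum>z\<in>X. exp (- d y z) * \<nu> z) \<le> exp (- d x y)"
    and "diversity_maximizing X d \<mu>"
  shows "x \<notin> support_on X \<mu>"
proof
  assume "x \<in> support_on X \<mu>"
  then have m0: "\<mu> x > 0" by (simp add: support_on_def)
  define m where "m = \<mu> x"
  define w where "w = (\<lambda>y. \<nu> y - (if y = x then 1 else 0))"
  have fin: "finite X" and sym: "\<forall>x\<in>X. \<forall>y\<in>X. d x y = d y x"
    and d0: "\<forall>x\<in>X. d x x = 0"
    using assms(1) unfolding finite_metric_space_def by auto
  have mu0: "\<forall>y\<in>X. \<mu> y \<ge> 0" and mu1: "(\<Sum>y\<in>X. \<mu> y) = 1"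
    using assms(7) unfolding diversity_maximizing_def prob_measure_on_def by auto
  have nu0: "\<forall>y\<in>X. \<nu> y \<ge> 0" and nu1: "(\<Sum>y\<in>X. \<nu> y) = 1"
    using assms(4) unfolding prob_measure_on_def by auto
  have Q: "diversity_form X d f = Bf X d f f" for f
    unfolding diversity_form_def Bf_def by simp
  have Zw: "(\<Sum>z\<in>X. exp (- d y z) * w z) \<le> 0" if "y \<in> X" for y
  proof -
    have "(\<Sum>z\<in>X. exp (- d y z) * w z) = (\<Sum>z\<in>X. exp (- d y z) * \<nu> z) - (\<Sum>z\<in>X. exp (- d y z) * (if z = x then 1 else 0))"
      unfolding w_def by (simp add: algebra_simps sum_subtractf)
    also have "(\<Sum>z\<in>X. exp (- d y z) * (if z = x then 1 else 0)) = exp (- d y x)"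
      using fin assms(3) by (simp add: if_distrib sum.delta cong: if_cong)
    also have "exp (- d y x) = exp (- d x y)" using sym that assms(3) by auto
    finally show ?thesis using assms(6) that by auto
  qed
  have a: "Bf X d \<mu> w \<le> 0"
    unfolding Bf_row using mu0 Zw by (intro sum_nonpos) (simp add: mult_nonneg_nonpos)
  have wx: "w x \<noteq> 0" using assms(5) by (simp add: w_def)
  have b: "Bf X d w w > 0"
    using assms(2) assms(3) wx unfolding positive_definite_space_def Bf_def
    by (auto simp: mult_ac)
  define \<mu>1 where "\<mu>1 = (\<lambda>y. \<mu> y + m * w y)"
  define \<mu>2 where "\<mu>2 = (\<lambda>y. \<mu> y + (m/2) * w y)"
  have mu1pos: "\<forall>y\<in>X. \<mu>1 y \<ge> 0"
    using mu0 nu0 m0 unfolding \<mu>1_def w_def m_def by (auto simp: algebra_simps)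
  have sumw: "(\<Sum>y\<in>X. w y) = 0"
    unfolding w_def using fin assms(3) nu1 by (simp add: sum_subtractf sum.delta)
  have p2: "prob_measure_on X \<mu>2"
    unfolding prob_measure_on_def
  proof
    show "\<forall>y\<in>X. 0 \<le> \<mu>2 y"
    proof
      fix y assume y: "y \<in> X"
      show "0 \<le> \<mu>2 y"
      proof (cases "y = x")
        case True then show ?thesis using m0 assms(5) unfolding \<mu>2_def w_def m_def by simp
      next
        case False then show ?thesis using mu0 nu0 y m0 unfolding \<mu>2_def w_def m_def by simp
      qed
    qed
    show "sum \<mu>2 X = 1" unfolding \<mu>2_def
      using sumw by (simp add: sum.distrib mu1 sum_divide_distrib[symmetric] sum_distrib_left[symmetric])
  qed
  have "diversity_form X d \<mu> \<le> diversity_form X d \<mu>2"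
    using assms(7) p2 unfolding diversity_maximizing_def by auto
  hence le2: "Bf X d \<mu> \<mu> \<le> Bf X d \<mu>2 \<mu>2" by (simp add: Q)
  have symB: "Bf X d w \<mu> = Bf X d \<mu> w" using Bf_sym[OF sym] by blast
  have e2: "Bf X d \<mu>2 \<mu>2 = Bf X d \<mu> \<mu> + m * Bf X d \<mu> w + (m/2)^2 * Bf X d w w"
    unfolding \<mu>2_def Bf_left Bf_right symB by (simp add: algebra_simps power2_eq_square)
  have e1: "Bf X d \<mu>1 \<mu>1 = Bf X d \<mu> \<mu> + 2 * m * Bf X d \<mu> w + m^2 * Bf X d w w"
    unfolding \<mu>1_def Bf_left Bf_right symB by (simp add: algebra_simps power2_eq_square)
  have "Bf X d \<mu>1 w \<le> 0"
    unfolding Bf_row using mu1pos Zw by (intro sum_nonpos) (simp add: mult_nonneg_nonpos)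
  moreover have "Bf X d \<mu>1 \<mu>1 = Bf X d \<mu>1 \<mu> + m * Bf X d \<mu>1 w"
    unfolding \<mu>1_def[of] by (simp only: Bf_right)
  moreover have "Bf X d \<mu>1 \<mu> = Bf X d \<mu> \<mu> + m * Bf X d \<mu> w"
    unfolding \<mu>1_def Bf_left symB by simp
  ultimately have "Bf X d \<mu>1 \<mu>1 \<le> Bf X d \<mu> \<mu> + m * Bf X d \<mu> w"
    using m0 m_def by (simp add: mult_nonneg_nonpos)
  with e1 have "m * Bf X d \<mu> w + m^2 * Bf X d w w \<le> 0" by simp
  hence "Bf X d \<mu> w + m * Bf X d w w \<le> 0" using m0 m_def
    by (metis (no_types, lifting) distrib_left mult_le_0_iff not_less power2_eq_square mult.assoc)
  hence "Bf X d \<mu>2 \<mu>2 < Bf X d \<mu> \<mu>"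
  proof -
    assume h: "Bf X d \<mu> w + m * Bf X d w w \<le> 0"
    have mp: "m > 0" using m0 m_def by simp
    have "m * Bf X d w w > 0" using mp b by simp
    hence "Bf X d \<mu> w + m / 4 * Bf X d w w < 0" using h by simp
    hence "m * (Bf X d \<mu> w + m / 4 * Bf X d w w) < 0" using mp by (simp add: mult_pos_neg)
    moreover have "m * Bf X d \<mu> w + (m/2)^2 * Bf X d w w = m * (Bf X d \<mu> w + m / 4 * Bf X d w w)"
      by (simp add: algebra_simps power2_eq_square)
    ultimately show ?thesis using e2 by simp
  qed
  with le2 show False by simp
qed

end
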